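(* Let $k\ge 2$ and $G=\Theta(2,2,2k)$ with end vertices $u$ and $v$. Let $L$ be a $3$-assignment for $G$ such that $L(u)\ne L(v)$. Then $P(G,L)\ge P(G,3)$.
   Context: $\Theta(l_1,l_2,l_3)$ denotes two end vertices joined by three internally disjoint paths of lengths $l_1,l_2,l_3$. A $3$-assignment $L$ assigns to each vertex $w$ a set $L(w)$ of $3$ colors; $P(G,L)$ is the number of proper colorings $f$ of $G$ with $f(w)\in L(w)$ for all $w$. $P(G,3)$ is the number of proper colorings of $G$ with colors from $\{1,2,3\}$. *)

theory Defs
  imports Main "HOL-Library.FuncSet"
begin

text \<open>Vertices of the theta graph Theta(l1,l2,l3): the two end vertices TU, TV and
  the internal vertices TI i j (j-th internal vertex of the i-th path, i in {1,2,3},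
  0 < j < l_i).\<close>
datatype tvert = TU | TV | TI nat nat

definition plen :: "nat \<Rightarrow> nat \<Rightarrow> nat \<Rightarrow> nat \<Rightarrow> nat" where
  "plen l1 l2 l3 i = (if i = 1 then l1 else if i = 2 then l2 else l3)"

definition tnode :: "nat \<Rightarrow> nat \<Rightarrow> nat \<Rightarrow> nat \<Rightarrow> nat \<Rightarrow> tvert" where
  "tnode l1 l2 l3 i j = (if j = 0 then TU else if j = plen l1 l2 l3 i then TV else TI i j)"

definition theta_verts :: "nat \<Rightarrow> nat \<Rightarrow> nat \<Rightarrow> tvert set" where
  "theta_verts l1 l2 l3 = {TU, TV} \<union>
     {TI i j | i j. i \<in> {1,2,3} \<and> 0 < j \<and> j < plen l1 l2 l3 i}"

text \<open>Edges (as ordered pairs; the graph is undirected).\<close>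
definition theta_edges :: "nat \<Rightarrow> nat \<Rightarrow> nat \<Rightarrow> (tvert \<times> tvert) set" where
  "theta_edges l1 l2 l3 = {(tnode l1 l2 l3 i j, tnode l1 l2 l3 i (j+1)) | i j.
       i \<in> {1,2,3} \<and> j < plen l1 l2 l3 i}"

definition num_list_col :: "'v set \<Rightarrow> ('v \<times> 'v) set \<Rightarrow> ('v \<Rightarrow> nat set) \<Rightarrow> nat" where
  "num_list_col Vs E L = card {f \<in> Pi\<^sub>E Vs L. \<forall>(x, y) \<in> E. f x \<noteq> f y}"

definition num_col :: "'v set \<Rightarrow> ('v \<times> 'v) set \<Rightarrow> nat \<Rightarrow> nat" where
  "num_col Vs E m = num_list_col Vs E (\<lambda>_. {1..m})"

end

theory Submission
  imports Defs
begin

lemma peel: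
  assumes "x \<notin> V" "finite V" "finite (L x)" "\<forall>v\<in>V. finite (L v)"
  shows "card {f \<in> PiE (insert x V) L. P f} = (\<Sum>c\<in>L x. card {g \<in> PiE V L. P (g(x:=c))})"
proof -
  have eq: "{f \<in> PiE (insert x V) L. P f} = (\<lambda>(c,g). g(x:=c)) ` (SIGMA c:L x. {g \<in> PiE V L. P (g(x:=c))})"
  proof (rule set_eqI, rule iffI)
    fix f assume "f \<in> {f \<in> PiE (insert x V) L. P f}"
    then have f: "f \<in> PiE (insert x V) L" "P f" by auto
    let ?g = "f(x:=undefined)"
    have "?g \<in> PiE V L" using f(1) assms(1) by (auto simp: PiE_def Pi_def extensional_def)
    moreover have "?g(x:= f x) = f" by simp
    moreover have "f x \<in> L x" using f(1) by auto
    ultimately show "f \<in> (\<lambda>(c,g). g(x:=c)) ` (SIGMA c:L x. {g \<in> PiE V L. P (g(x:=c))})"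
      using f(2) by (auto intro!: image_eqI[where x="(f x, ?g)"])
  next
    fix f assume "f \<in> (\<lambda>(c,g). g(x:=c)) ` (SIGMA c:L x. {g \<in> PiE V L. P (g(x:=c))})"
    then obtain c g where "c \<in> L x" "g \<in> PiE V L" "P (g(x:=c))" "f = g(x:=c)" by auto
    then show "f \<in> {f \<in> PiE (insert x V) L. P f}" by (auto simp: PiE_def Pi_def extensional_def)
  qed
  have inj: "inj_on (\<lambda>(c,g). g(x:=c)) (SIGMA c:L x. {g \<in> PiE V L. P (g(x:=c))})"
  proof (rule inj_onI, clarsimp)
    fix c g c' g'
    assume h: "g \<in> PiE V L" "g' \<in> PiE V L" "g(x:=c) = g'(x:=c')"
    have "c = c'" using fun_cong[OF h(3), of x] by simp
    moreover have "g = g'"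
    proof
      fix y show "g y = g' y"
        using fun_cong[OF h(3), of y] PiE_arb[OF h(1) assms(1)] PiE_arb[OF h(2) assms(1)]
        by (cases "y = x") auto
    qed
    ultimately show "c = c' \<and> g = g'" by simp
  qed
  have fin: "\<forall>c\<in>L x. finite {g \<in> PiE V L. P (g(x:=c))}"
  proof
    fix c
    have "finite (PiE V L)" using finite_PiE[OF assms(2)] assms(4) by auto
    then show "finite {g \<in> PiE V L. P (g(x:=c))}" by simp
  qed
  show ?thesis by (simp add: eq card_image[OF inj] card_SigmaI assms(3) fin)
qed


definition Wp :: "nat \<Rightarrow> tvert set" where "Wp n = (\<lambda>j. TI 3 j) ` {0<..<n}"
definition pathf :: "nat \<Rightarrow> (tvert \<Rightarrow> nat) \<Rightarrow> nat \<Rightarrow> nat" where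
  "pathf \<alpha> h j = (if j = 0 then \<alpha> else h (TI 3 j))"
definition pchain :: "nat \<Rightarrow> nat \<Rightarrow> (tvert \<Rightarrow> nat) \<Rightarrow> bool" where
  "pchain \<alpha> n h = (\<forall>i. Suc i < n \<longrightarrow> pathf \<alpha> h i \<noteq> pathf \<alpha> h (Suc i))"
definition Qc :: "(tvert \<Rightarrow> nat set) \<Rightarrow> nat \<Rightarrow> nat \<Rightarrow> nat \<Rightarrow> nat" where
  "Qc L \<alpha> n c = card {h \<in> PiE (Wp n) L. pchain \<alpha> n h \<and> pathf \<alpha> h (n - 1) \<noteq> c}"
fun pa :: "nat \<Rightarrow> nat" where
  "pa 0 = 0" | "pa (Suc j) = 2 * pa j + (if odd j then 1 else 0)"

lemma Wp_fin: "finite (Wp n)" by (simp add: Wp_def)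
lemma Wp_Suc: "n \<ge> 1 \<Longrightarrow> Wp (Suc n) = insert (TI 3 n) (Wp n)"
  unfolding Wp_def by (auto simp: image_iff)
lemma Wp_notin: "TI 3 n \<notin> Wp n" unfolding Wp_def by auto
lemma Wp_1: "Wp (Suc 0) = {}" unfolding Wp_def by auto

lemma pathf_upd: "n \<ge> 1 \<Longrightarrow> pathf \<alpha> (g(TI 3 n := d)) i = (if i = n then d else pathf \<alpha> g i)"
  unfolding pathf_def by auto

lemma pchain_upd:
  assumes "n \<ge> 1"
  shows "(pchain \<alpha> (Suc n) (g(TI 3 n := d)) \<and> pathf \<alpha> (g(TI 3 n := d)) (Suc n - 1) \<noteq> c)
     = (pchain \<alpha> n g \<and> pathf \<alpha> g (n - 1) \<noteq> d \<and> d \<noteq> c)"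
proof -
  have a: "pchain \<alpha> (Suc n) (g(TI 3 n := d)) = (pchain \<alpha> n g \<and> pathf \<alpha> g (n - 1) \<noteq> d)"
  proof
    assume h: "pchain \<alpha> (Suc n) (g(TI 3 n := d))"
    have "pchain \<alpha> n g" unfolding pchain_def
    proof (intro allI impI)
      fix i assume "Suc i < n"
      then show "pathf \<alpha> g i \<noteq> pathf \<alpha> g (Suc i)"
        using h[unfolded pchain_def, rule_format, of i] pathf_upd[OF assms] by auto
    qed
    moreover have "pathf \<alpha> g (n - 1) \<noteq> d"
      using h[unfolded pchain_def, rule_format, of "n - 1"] pathf_upd[OF assms] assms by auto
    ultimately show "pchain \<alpha> n g \<and> pathf \<alpha> g (n - 1) \<noteq> d" by simp
  next
    assume h: "pchain \<alpha> n g \<and> pathf \<alpha> g (n - 1) \<noteq> d"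
    show "pchain \<alpha> (Suc n) (g(TI 3 n := d))" unfolding pchain_def
    proof (intro allI impI)
      fix i assume i: "Suc i < Suc n"
      show "pathf \<alpha> (g(TI 3 n := d)) i \<noteq> pathf \<alpha> (g(TI 3 n := d)) (Suc i)"
      proof (cases "Suc i = n")
        case True then show ?thesis using h pathf_upd[OF assms] by auto
      next
        case False then show ?thesis using h i pathf_upd[OF assms] unfolding pchain_def by auto
      qed
    qed
  qed
  show ?thesis using a pathf_upd[OF assms] by auto
qed

lemma Qc_1: "Qc L \<alpha> (Suc 0) c = (if \<alpha> \<noteq> c then 1 else 0)"
  unfolding Qc_def Wp_1 by (simp add: pchain_def pathf_def)

lemma Qc_Suc:
  assumes "n \<ge> 1" "\<forall>j. 0 < j \<and> j \<le> n \<longrightarrow> finite (L (TI 3 j))"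
  shows "Qc L \<alpha> (Suc n) c = (\<Sum>d\<in>L (TI 3 n). if d \<noteq> c then Qc L \<alpha> n d else 0)"
proof -
  have fin: "\<forall>v\<in>Wp n. finite (L v)" using assms(2) unfolding Wp_def by auto
  have "Qc L \<alpha> (Suc n) c = (\<Sum>d\<in>L (TI 3 n). card {g \<in> PiE (Wp n) L.
       pchain \<alpha> (Suc n) (g(TI 3 n := d)) \<and> pathf \<alpha> (g(TI 3 n := d)) (Suc n - 1) \<noteq> c})"
    unfolding Qc_def Wp_Suc[OF assms(1)]
    by (rule peel[OF Wp_notin Wp_fin _ fin]) (use assms in auto)
  also have "\<dots> = (\<Sum>d\<in>L (TI 3 n). if d \<noteq> c then Qc L \<alpha> n d else 0)"
    unfolding pchain_upd[OF assms(1)] Qc_def by (rule sum.cong) auto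
  finally show ?thesis .
qed


lemma pa_SS: "pa (Suc (Suc j)) = pa (Suc j) + 2 * pa j + 1"
  by simp

lemma sum_minus_c: "finite A \<Longrightarrow> (\<Sum>d\<in>A. if d \<noteq> c then f d else 0) = sum f (A - {c})"
proof -
  assume "finite A"
  then have "sum f {d \<in> A. d \<noteq> c} = (\<Sum>d\<in>A. if d \<noteq> c then f d else 0)"
    by (rule sum.inter_filter)
  moreover have "{d \<in> A. d \<noteq> c} = A - {c}" by auto
  ultimately show ?thesis by simp
qed

lemma two_in: "finite A \<Longrightarrow> card A \<ge> 2 \<Longrightarrow> \<exists>x y. x \<in> A \<and> y \<in> A \<and> x \<noteq> y"
  by (metis One_nat_def card.empty card_le_Suc0_iff_eq not_less_eq_eq numeral_2_eq_2 zero_le)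

lemma inv_step:
  fixes Q Q' :: "nat \<Rightarrow> nat" and L :: "nat set"
  assumes L3: "card L = 3"
    and Q': "\<And>c. Q' c = sum Q (L - {c})"
    and i: "\<And>c. Q c \<ge> a"
    and ii: "\<And>c1 c2. c1 \<noteq> c2 \<Longrightarrow> Q c1 + Q c2 \<ge> b"
    and iii: "\<And>S. card S = 3 \<Longrightarrow> sum Q S \<ge> t"
  shows "\<And>c. Q' c \<ge> b" "\<And>c1 c2. c1 \<noteq> c2 \<Longrightarrow> Q' c1 + Q' c2 \<ge> t + a"
    "\<And>S. card S = 3 \<Longrightarrow> sum Q' S \<ge> 2 * t"
proof -
  have finL: "finite L" using L3 by (metis card.infinite zero_neq_numeral)
  fix c
  have "card (L - {c}) \<ge> 2" using L3 finL
    by (metis card_Diff_singleton_if diff_Suc_1 eval_nat_numeral(3) le_refl lessI less_imp_le_nat)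
  then obtain x y where xy: "x \<in> L - {c}" "y \<in> L - {c}" "x \<noteq> y" using two_in finL by blast
  have "Q x + Q y = sum Q {x, y}" using xy by simp
  also have "\<dots> \<le> sum Q (L - {c})" by (rule sum_mono2) (use finL xy in auto)
  finally show "Q' c \<ge> b" using ii[OF xy(3)] Q' by simp
next
  have finL: "finite L" using L3 by (metis card.infinite zero_neq_numeral)
  fix c1 c2 :: nat assume ne: "c1 \<noteq> c2"
  have "sum Q (L - {c1}) + sum Q (L - {c2}) = sum Q ((L - {c1}) \<union> (L - {c2})) + sum Q ((L - {c1}) \<inter> (L - {c2}))"
    using finL by (simp add: sum.union_inter)
  moreover have "(L - {c1}) \<union> (L - {c2}) = L" using ne by auto
  moreover have "(L - {c1}) \<inter> (L - {c2}) = L - {c1, c2}" by auto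
  moreover have "L - {c1, c2} \<noteq> {}"
  proof
    assume "L - {c1, c2} = {}"
    then have "L \<subseteq> {c1, c2}" by auto
    then have "card L \<le> 2" by (metis card_2_iff card_mono finite.emptyI finite.insertI ne) 
    then show False using L3 by simp
  qed
  then obtain z where z: "z \<in> L - {c1, c2}" by auto
  have "Q z \<le> sum Q (L - {c1, c2})" by (rule member_le_sum) (use z finL in auto)
  ultimately show "Q' c1 + Q' c2 \<ge> t + a" using Q' iii[OF L3] i[of z] by simp
next
  have finL: "finite L" using L3 by (metis card.infinite zero_neq_numeral)
  fix S :: "nat set" assume S3: "card S = 3"
  have finS: "finite S" using S3 by (metis card.infinite zero_neq_numeral)
  have "sum Q' S = (\<Sum>c\<in>S. \<Sum>d\<in>L. if d \<noteq> c then Q d else 0)"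
    unfolding Q' by (rule sum.cong[OF refl], rule sum_minus_c[OF finL, symmetric])
  also have "\<dots> = (\<Sum>d\<in>L. \<Sum>c\<in>S. if d \<noteq> c then Q d else 0)" by (rule sum.swap)
  also have "\<dots> = (\<Sum>d\<in>L. Q d * card (S - {d}))"
  proof (rule sum.cong[OF refl])
    fix d
    have "(\<Sum>c\<in>S. if d \<noteq> c then Q d else 0) = (\<Sum>c\<in>S. if c \<noteq> d then Q d else 0)"
      by (rule sum.cong) auto
    also have "\<dots> = sum (\<lambda>_. Q d) (S - {d})" by (rule sum_minus_c[OF finS])
    finally show "(\<Sum>c\<in>S. if d \<noteq> c then Q d else 0) = Q d * card (S - {d})" by simp
  qed
  also have "\<dots> \<ge> (\<Sum>d\<in>L. Q d * 2)"
  proof (rule sum_mono)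
    fix d
    have "card (S - {d}) \<ge> 2" using S3 finS
      by (metis card_Diff_singleton_if diff_Suc_1 eval_nat_numeral(3) le_refl lessI less_imp_le_nat)
    then show "Q d * 2 \<le> Q d * card (S - {d})" by simp
  qed
  finally show "sum Q' S \<ge> 2 * t" using iii[OF L3] by (simp add: sum_distrib_right[symmetric])
qed


lemma Qc_Suc':
  assumes "n \<ge> 1" "\<forall>j. 0 < j \<and> j \<le> n \<longrightarrow> finite (L (TI 3 j))"
  shows "Qc L \<alpha> (Suc n) c = sum (Qc L \<alpha> n) (L (TI 3 n) - {c})"
proof -
  have "finite (L (TI 3 n))" using assms by auto
  then show ?thesis using Qc_Suc[OF assms] sum_minus_c by metis
qed

lemma Qc_list:
  assumes L3: "\<forall>j. 0 < j \<and> j < n \<longrightarrow> card (L (TI 3 j)) = 3"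
  shows "1 \<le> m \<Longrightarrow> m \<le> n \<Longrightarrow> (\<forall>c. Qc L \<alpha> m c \<ge> pa m) \<and>
     (\<forall>c1 c2. c1 \<noteq> c2 \<longrightarrow> Qc L \<alpha> m c1 + Qc L \<alpha> m c2 \<ge> pa (Suc m)) \<and>
     (\<forall>S. card S = 3 \<longrightarrow> sum (Qc L \<alpha> m) S \<ge> pa m + pa (Suc m) + 1)"
proof (induction m)
  case 0 then show ?case by simp
next
  case (Suc m)
  show ?case
  proof (cases "m = 0")
    case True
    have t: "sum (Qc L \<alpha> (Suc 0)) S \<ge> 2" if "card S = 3" for S
    proof -
      have finS: "finite S" using that by (metis card.infinite zero_neq_numeral)
      have "sum (Qc L \<alpha> (Suc 0)) S = (\<Sum>c\<in>S. if c \<noteq> \<alpha> then 1 else 0)"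
        by (rule sum.cong) (auto simp: Qc_1)
      also have "\<dots> = card (S - {\<alpha>})" using sum_minus_c[OF finS, of \<alpha> "\<lambda>_. 1::nat"] by simp
      also have "\<dots> \<ge> 2" using that finS
        by (metis card_Diff_singleton_if diff_Suc_1 eval_nat_numeral(3) le_refl lessI less_imp_le_nat)
      finally show ?thesis .
    qed
    have p: "pa (Suc 0) + pa (Suc (Suc 0)) + 1 = 2" "pa (Suc (Suc 0)) = 1" by simp_all
    have 2: "\<forall>c1 c2. c1 \<noteq> c2 \<longrightarrow> Qc L \<alpha> (Suc 0) c1 + Qc L \<alpha> (Suc 0) c2 \<ge> 1"
      by (auto simp: Qc_1)
    have 1: "\<forall>c. Qc L \<alpha> (Suc 0) c \<ge> pa (Suc 0)" by simp
    show ?thesis using True 1 2 p t by (metis One_nat_def)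
  next
    case False
    then have IH: "(\<forall>c. Qc L \<alpha> m c \<ge> pa m) \<and>
     (\<forall>c1 c2. c1 \<noteq> c2 \<longrightarrow> Qc L \<alpha> m c1 + Qc L \<alpha> m c2 \<ge> pa (Suc m)) \<and>
     (\<forall>S. card S = 3 \<longrightarrow> sum (Qc L \<alpha> m) S \<ge> pa m + pa (Suc m) + 1)"
      using Suc by simp
    have c3: "card (L (TI 3 m)) = 3" using L3 Suc.prems False by auto
    have fin: "\<forall>j. 0 < j \<and> j \<le> m \<longrightarrow> finite (L (TI 3 j))"
      using L3 Suc.prems by (metis card.infinite le_imp_less_Suc order_less_le_trans zero_neq_numeral)
    have Q': "\<And>c. Qc L \<alpha> (Suc m) c = sum (Qc L \<alpha> m) (L (TI 3 m) - {c})"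
      by (rule Qc_Suc') (use False fin in auto)
    note st = inv_step[OF c3 Q', of "pa m" "pa (Suc m)" "pa m + pa (Suc m) + 1"]
    have 1: "\<forall>c. Qc L \<alpha> (Suc m) c \<ge> pa (Suc m)" using st(1) IH by blast
    have 2: "\<forall>c1 c2. c1 \<noteq> c2 \<longrightarrow> Qc L \<alpha> (Suc m) c1 + Qc L \<alpha> (Suc m) c2 \<ge> pa (Suc (Suc m))"
    proof (intro allI impI)
      fix c1 c2 :: nat assume "c1 \<noteq> c2"
      then have "Qc L \<alpha> (Suc m) c1 + Qc L \<alpha> (Suc m) c2 \<ge> pa m + pa (Suc m) + 1 + pa m"
        using st(2) IH by blast
      then show "Qc L \<alpha> (Suc m) c1 + Qc L \<alpha> (Suc m) c2 \<ge> pa (Suc (Suc m))" by (simp only: pa_SS)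
    qed
    have 3: "\<forall>S. card S = 3 \<longrightarrow> sum (Qc L \<alpha> (Suc m)) S \<ge> pa (Suc m) + pa (Suc (Suc m)) + 1"
    proof (intro allI impI)
      fix S :: "nat set" assume "card S = 3"
      then have "sum (Qc L \<alpha> (Suc m)) S \<ge> 2 * (pa m + pa (Suc m) + 1)"
        using st(3) IH by blast
      then show "sum (Qc L \<alpha> (Suc m)) S \<ge> pa (Suc m) + pa (Suc (Suc m)) + 1" unfolding pa_SS by (simp del: pa.simps)
    qed
    show ?thesis using 1 2 3 by blast
  qed
qed

lemma Qc_K3:
  assumes "\<alpha> \<in> {1..3}"
  shows "m \<ge> 1 \<Longrightarrow> \<forall>c\<in>{1..3}. Qc (\<lambda>_. {1..3}) \<alpha> m c = pa m + (if (c = \<alpha>) = even m then 1 else 0)"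
proof (induction m)
  case 0 then show ?case by simp
next
  case (Suc m)
  show ?case
  proof (cases "m = 0")
    case True then show ?thesis by (auto simp: Qc_1)
  next
    case False
    then have IH: "\<forall>c\<in>{1..3}. Qc (\<lambda>_. {1..3}) \<alpha> m c = pa m + (if (c = \<alpha>) = even m then 1 else 0)"
      using Suc by simp
    have Q': "\<And>c. Qc (\<lambda>_. {1..3}) \<alpha> (Suc m) c = sum (Qc (\<lambda>_. {1..3}) \<alpha> m) ({1..3} - {c})"
      by (rule Qc_Suc') (use False in auto)
    have e: "{1..3::nat} = {1,2,3}" by auto
    show ?thesis
    proof
      fix c :: nat assume c: "c \<in> {1..3}"
      show "Qc (\<lambda>_. {1..3}) \<alpha> (Suc m) c = pa (Suc m) + (if (c = \<alpha>) = even (Suc m) then 1 else 0)"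
        unfolding Q' using IH c assms unfolding e by (auto simp: insert_Diff_if)
    qed
  qed
qed


lemma sum_ind: "finite A \<Longrightarrow> (\<Sum>x\<in>A. if P x then 1 else 0::nat) = card {x\<in>A. P x}"
  by (simp add: sum.inter_filter[symmetric])

lemma fX_pt:
  assumes "card X = 3"
  shows "card (X - {a, b}) + (if a \<in> X then 1 else 0) + (if b \<in> X then 1 else 0)
        = 3 + (if b = a \<and> a \<in> X then 1 else 0)"
proof -
  have fin: "finite X" using assms by (metis card.infinite zero_neq_numeral)
  have d: "card (X - {a, b}) = card X - card (X \<inter> {a, b})"
    by (simp add: card_Diff_subset_Int)
  have le: "card (X \<inter> {a, b}) \<le> card X" using fin by (simp add: card_mono)
  have "card (X \<inter> {a, b}) + (if b = a \<and> a \<in> X then 1 else 0) = (if a \<in> X then 1 else 0) + (if b \<in> X then 1 else 0)"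
  proof (cases "a = b")
    case True
    then show ?thesis by (cases "a \<in> X") (simp_all add: Int_insert_right)
  next
    case False
    show ?thesis
    proof (cases "a \<in> X"; cases "b \<in> X")
      assume "a \<in> X" "b \<in> X" then have "X \<inter> {a, b} = {a, b}" by auto
      then show ?thesis using False \<open>a \<in> X\<close> \<open>b \<in> X\<close> by simp
    next
      assume "a \<in> X" "b \<notin> X" then have "X \<inter> {a, b} = {a}" by auto
      then show ?thesis using False \<open>a \<in> X\<close> \<open>b \<notin> X\<close> by simp
    next
      assume "a \<notin> X" "b \<in> X" then have "X \<inter> {a, b} = {b}" by auto
      then show ?thesis using False \<open>a \<notin> X\<close> \<open>b \<in> X\<close> by simp
    next
      assume "a \<notin> X" "b \<notin> X" then have "X \<inter> {a, b} = {}" by auto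
      then show ?thesis using False \<open>a \<notin> X\<close> \<open>b \<notin> X\<close> by simp
    qed
  qed
  then show ?thesis using d le assms by linarith
qed

lemma sum_delta_and: "finite V \<Longrightarrow> (\<Sum>b\<in>V. (if b = a \<and> P then 1 else 0::nat)) = (if a \<in> V \<and> P then 1 else 0)"
proof -
  assume f: "finite V"
  have "(\<Sum>b\<in>V. (if b = a \<and> P then 1 else 0::nat)) = (\<Sum>b\<in>V. (if b = a then (if P then 1 else 0) else 0::nat))"
    by (rule sum.cong) auto
  also have "\<dots> = (if a \<in> V then (if P then 1 else 0) else 0)" by (rule sum.delta[OF f])
  finally show ?thesis by simp
qed

lemma sumfX:
  assumes "card X = 3" "card U = 3" "card V = 3"
  shows "(\<Sum>a\<in>U. \<Sum>b\<in>V. card (X - {a, b})) + 2 * card (U \<inter> V) \<ge> 18"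
proof -
  have finU: "finite U" using assms by (metis card.infinite zero_neq_numeral)
  have finV: "finite V" using assms by (metis card.infinite zero_neq_numeral)
  have finX: "finite X" using assms by (metis card.infinite zero_neq_numeral)
  have sVX: "(\<Sum>b\<in>V. (if b \<in> X then 1 else 0::nat)) = card (V \<inter> X)"
  proof -
    have "{b \<in> V. b \<in> X} = V \<inter> X" by auto
    then show ?thesis using sum_ind[OF finV, of "\<lambda>b. b \<in> X"] by simp
  qed
  have row: "(\<Sum>b\<in>V. card (X - {a, b})) + card V * (if a \<in> X then 1 else 0) + card (V \<inter> X)
        = 3 * card V + (if a \<in> V \<and> a \<in> X then 1 else 0)" for a
  proof -
    have "(\<Sum>b\<in>V. card (X - {a, b}) + (if a \<in> X then 1 else 0) + (if b \<in> X then 1 else 0))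
        = (\<Sum>b\<in>V. 3 + (if b = a \<and> a \<in> X then 1 else 0))"
      by (rule sum.cong[OF refl]) (rule fX_pt[OF assms(1)])
    also have "\<dots> = 3 * card V + (if a \<in> V \<and> a \<in> X then 1 else 0)"
      by (simp only: sum.distrib sum_delta_and[OF finV] sum_constant) simp
    finally have "(\<Sum>b\<in>V. card (X - {a, b}) + (if a \<in> X then 1 else 0) + (if b \<in> X then 1 else 0))
        = 3 * card V + (if a \<in> V \<and> a \<in> X then 1 else 0)" .
    moreover have "(\<Sum>b\<in>V. card (X - {a, b}) + (if a \<in> X then 1 else 0) + (if b \<in> X then 1 else 0))
        = (\<Sum>b\<in>V. card (X - {a, b})) + card V * (if a \<in> X then 1 else 0) + card (V \<inter> X)"
      by (simp only: sum.distrib sum_constant sVX) simp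
    ultimately show ?thesis by simp
  qed
  have sUX: "(\<Sum>a\<in>U. (if a \<in> X then 1 else 0::nat)) = card (U \<inter> X)"
  proof -
    have "{b \<in> U. b \<in> X} = U \<inter> X" by auto
    then show ?thesis using sum_ind[OF finU, of "\<lambda>b. b \<in> X"] by simp
  qed
  have sUVX: "(\<Sum>a\<in>U. (if a \<in> V \<and> a \<in> X then 1 else 0::nat)) = card (U \<inter> V \<inter> X)"
  proof -
    have "{b \<in> U. b \<in> V \<and> b \<in> X} = U \<inter> V \<inter> X" by auto
    then show ?thesis using sum_ind[OF finU, of "\<lambda>b. b \<in> V \<and> b \<in> X"] by simp
  qed
  have "(\<Sum>a\<in>U. (\<Sum>b\<in>V. card (X - {a, b})) + card V * (if a \<in> X then 1 else 0) + card (V \<inter> X))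
       = (\<Sum>a\<in>U. 3 * card V + (if a \<in> V \<and> a \<in> X then 1 else 0))"
    using row by (rule sum.cong[OF refl])
  then have e: "(\<Sum>a\<in>U. \<Sum>b\<in>V. card (X - {a, b})) + card V * card (U \<inter> X) + card U * card (V \<inter> X)
       = card U * (3 * card V) + card (U \<inter> V \<inter> X)"
    by (simp only: sum.distrib sum_constant sum_distrib_left[symmetric] sUX sUVX) simp
  have f0: "card (U \<inter> X) + card (V \<inter> X) = card ((U \<inter> X) \<union> (V \<inter> X)) + card ((U \<inter> X) \<inter> (V \<inter> X))"
    by (rule card_Un_Int) (use finU finV in auto)
  have f1: "(U \<inter> X) \<inter> (V \<inter> X) = U \<inter> V \<inter> X" by auto
  have f2: "card ((U \<inter> X) \<union> (V \<inter> X)) \<le> 3"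
    using card_mono[OF finX, of "(U \<inter> X) \<union> (V \<inter> X)"] assms(1) by auto
  have f3: "card (U \<inter> V \<inter> X) \<le> card (U \<inter> V)"
    by (rule card_mono) (use finU in auto)
  show ?thesis using e f0 f1 f2 f3 assms(2,3) by (simp only:)
qed

lemma card3_diff2: "card X = 3 \<Longrightarrow> card (X - {a, b}) \<ge> 1"
proof -
  assume X: "card X = 3"
  have fin: "finite X" using X by (metis card.infinite zero_neq_numeral)
  have "card X \<le> card (X - {a, b}) + card {a, b}"
    by (metis Un_Diff_cancel card_Un_le sup.commute card_mono fin finite_Un le_trans sup_ge1 finite.emptyI finite.insertI finite_Diff)
  moreover have "card {a, b} \<le> 2" by (simp add: card_insert_le_m1)
  ultimately show ?thesis using X by linarith
qed

lemma card3_diff1: "card X = 3 \<Longrightarrow> card (X - {a, a}) \<ge> 2"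
  by (metis card_Diff_singleton_if diff_Suc_1 eval_nat_numeral(3) le_refl lessI less_imp_le_nat insert_absorb2)

lemma sumA:
  assumes "card U = 3" "card V = 3" "card X = 3" "card Y = 3" "U \<noteq> V"
  shows "(\<Sum>a\<in>U. \<Sum>b\<in>V. card (X - {a, b}) * card (Y - {a, b})) \<ge> 21"
proof -
  have finU: "finite U" using assms by (metis card.infinite zero_neq_numeral)
  have finV: "finite V" using assms by (metis card.infinite zero_neq_numeral)
  have pt: "card (X - {a, b}) * card (Y - {a, b}) + 1 \<ge> card (X - {a, b}) + card (Y - {a, b}) + (if b = a then 1 else 0)" for a b
  proof (cases "b = a")
    case True
    have "card (X - {a, b}) \<ge> 2" "card (Y - {a, b}) \<ge> 2"
      using card3_diff1[OF assms(3), of a] card3_diff1[OF assms(4), of a] True by simp_all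
    then obtain p q where "card (X - {a, b}) = p + 2" "card (Y - {a, b}) = q + 2"
      by (metis le_add_diff_inverse2)
    then show ?thesis using True by (simp add: algebra_simps)
  next
    case False
    have "card (X - {a, b}) \<ge> 1" "card (Y - {a, b}) \<ge> 1"
      using card3_diff2[OF assms(3)] card3_diff2[OF assms(4)] by auto
    then obtain p q where "card (X - {a, b}) = p + 1" "card (Y - {a, b}) = q + 1"
      by (metis le_add_diff_inverse2)
    then show ?thesis using False by (simp add: algebra_simps)
  qed
  have "(\<Sum>a\<in>U. \<Sum>b\<in>V. card (X - {a, b}) * card (Y - {a, b}) + 1) \<ge>
        (\<Sum>a\<in>U. \<Sum>b\<in>V. card (X - {a, b}) + card (Y - {a, b}) + (if b = a then 1 else 0))"
    by (intro sum_mono pt)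
  moreover have "(\<Sum>a\<in>U. \<Sum>b\<in>V. card (X - {a, b}) * card (Y - {a, b}) + 1) =
     (\<Sum>a\<in>U. \<Sum>b\<in>V. card (X - {a, b}) * card (Y - {a, b})) + 9"
    using assms(1,2) by (simp only: sum.distrib) simp
  moreover have "(\<Sum>a\<in>U. \<Sum>b\<in>V. card (X - {a, b}) + card (Y - {a, b}) + (if b = a then 1 else 0)) =
     (\<Sum>a\<in>U. \<Sum>b\<in>V. card (X - {a, b})) + (\<Sum>a\<in>U. \<Sum>b\<in>V. card (Y - {a, b})) + card (U \<inter> V)"
  proof -
    have "(\<Sum>a\<in>U. \<Sum>b\<in>V. (if b = a then 1 else 0::nat)) = (\<Sum>a\<in>U. if a \<in> V then 1 else 0)"
      using finV by (simp add: sum.delta)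
    also have "\<dots> = card (U \<inter> V)" using sum_ind[OF finU, of "\<lambda>a. a \<in> V"] by (simp add: Int_def)
    finally show ?thesis by (simp add: sum.distrib)
  qed
  moreover have "(\<Sum>a\<in>U. \<Sum>b\<in>V. card (X - {a, b})) + 2 * card (U \<inter> V) \<ge> 18"
    using sumfX assms by blast
  moreover have "(\<Sum>a\<in>U. \<Sum>b\<in>V. card (Y - {a, b})) + 2 * card (U \<inter> V) \<ge> 18"
    using sumfX assms by blast
  moreover have "card (U \<inter> V) \<le> 2"
  proof (rule ccontr)
    assume "\<not> card (U \<inter> V) \<le> 2"
    then have "card (U \<inter> V) \<ge> 3" by simp
    moreover have "card (U \<inter> V) \<le> card U" "card (U \<inter> V) \<le> card V"
      using finU finV by (simp_all add: card_mono)
    ultimately have "U \<inter> V = U" "U \<inter> V = V" using assms finU finV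
      by (metis Int_lower1 Int_lower2 card_subset_eq le_antisym)+
    then show False using assms(5) by simp
  qed
  ultimately show ?thesis by linarith
qed

lemma verts_eq: "k \<ge> 1 \<Longrightarrow> theta_verts 2 2 (2*k) = insert TU (insert TV (insert (TI 1 1) (insert (TI 2 1) (Wp (2*k)))))"
proof (rule set_eqI)
  fix w assume k: "k \<ge> 1"
  show "w \<in> theta_verts 2 2 (2*k) \<longleftrightarrow> w \<in> insert TU (insert TV (insert (TI 1 1) (insert (TI 2 1) (Wp (2*k)))))"
  proof (cases w)
    case (TI i j)
    have "w \<in> theta_verts 2 2 (2*k) \<longleftrightarrow> i \<in> {1,2,3} \<and> 0 < j \<and> j < plen 2 2 (2*k) i"
      unfolding theta_verts_def TI by blast
    also have "\<dots> \<longleftrightarrow> (i = 1 \<and> j = 1) \<or> (i = 2 \<and> j = 1) \<or> (i = 3 \<and> 0 < j \<and> j < 2*k)"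
      by (auto simp: plen_def)
    also have "\<dots> \<longleftrightarrow> w \<in> insert TU (insert TV (insert (TI 1 1) (insert (TI 2 1) (Wp (2*k)))))"
      unfolding TI Wp_def by auto
    finally show ?thesis .
  qed (auto simp: theta_verts_def)
qed

lemma tn3: "tnode 2 2 (2*k) 3 j = (if j = 0 then TU else if j = 2*k then TV else TI 3 j)"
  by (simp add: tnode_def plen_def)

lemma proper_iff:
  assumes "k \<ge> 1"
  shows "(\<forall>(x,y)\<in>theta_edges 2 2 (2*k). F x \<noteq> F y) =
    (F TU \<noteq> F (TI 1 1) \<and> F (TI 1 1) \<noteq> F TV \<and> F TU \<noteq> F (TI 2 1) \<and> F (TI 2 1) \<noteq> F TV \<and>
     (\<forall>j<2*k. F (tnode 2 2 (2*k) 3 j) \<noteq> F (tnode 2 2 (2*k) 3 (Suc j))))"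
proof -
  have "(\<forall>(x,y)\<in>theta_edges 2 2 (2*k). F x \<noteq> F y) =
     (\<forall>i\<in>{1,2,3}. \<forall>j < plen 2 2 (2*k) i. F (tnode 2 2 (2*k) i j) \<noteq> F (tnode 2 2 (2*k) i (j+1)))"
    unfolding theta_edges_def by blast
  also have "\<dots> = ((\<forall>j < 2. F (tnode 2 2 (2*k) 1 j) \<noteq> F (tnode 2 2 (2*k) 1 (j+1))) \<and>
      (\<forall>j < 2. F (tnode 2 2 (2*k) 2 j) \<noteq> F (tnode 2 2 (2*k) 2 (j+1))) \<and>
      (\<forall>j<2*k. F (tnode 2 2 (2*k) 3 j) \<noteq> F (tnode 2 2 (2*k) 3 (Suc j))))"
    by (simp add: plen_def)
  also have "(\<forall>j < 2. F (tnode 2 2 (2*k) 1 j) \<noteq> F (tnode 2 2 (2*k) 1 (j+1))) = (F TU \<noteq> F (TI 1 1) \<and> F (TI 1 1) \<noteq> F TV)"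
    by (auto simp: tnode_def plen_def less_2_cases_iff)
  also have "(\<forall>j < 2. F (tnode 2 2 (2*k) 2 j) \<noteq> F (tnode 2 2 (2*k) 2 (j+1))) = (F TU \<noteq> F (TI 2 1) \<and> F (TI 2 1) \<noteq> F TV)"
    by (auto simp: tnode_def plen_def less_2_cases_iff)
  finally show ?thesis by blast
qed

lemma path_iff:
  assumes "k \<ge> 1" and G1: "\<And>j. j < 2*k \<Longrightarrow> G (tnode 2 2 (2*k) 3 j) = pathf \<alpha> h j"
    and G2: "G (tnode 2 2 (2*k) 3 (2*k)) = \<beta>"
  shows "(\<forall>j<2*k. G (tnode 2 2 (2*k) 3 j) \<noteq> G (tnode 2 2 (2*k) 3 (Suc j))) =
     (pchain \<alpha> (2*k) h \<and> pathf \<alpha> h (2*k - 1) \<noteq> \<beta>)"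
proof
  assume h: "\<forall>j<2*k. G (tnode 2 2 (2*k) 3 j) \<noteq> G (tnode 2 2 (2*k) 3 (Suc j))"
  have "pchain \<alpha> (2*k) h" unfolding pchain_def
  proof (intro allI impI)
    fix i assume "Suc i < 2*k"
    then show "pathf \<alpha> h i \<noteq> pathf \<alpha> h (Suc i)" using h[rule_format, of i] G1[of i] G1[of "Suc i"] by simp
  qed
  moreover have "pathf \<alpha> h (2*k - 1) \<noteq> \<beta>"
    using h[rule_format, of "2*k-1"] G1[of "2*k-1"] G2 assms(1) by (simp add: Suc_diff_le)
  ultimately show "pchain \<alpha> (2*k) h \<and> pathf \<alpha> h (2*k - 1) \<noteq> \<beta>" by simp
next
  assume h: "pchain \<alpha> (2*k) h \<and> pathf \<alpha> h (2*k - 1) \<noteq> \<beta>"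
  show "\<forall>j<2*k. G (tnode 2 2 (2*k) 3 j) \<noteq> G (tnode 2 2 (2*k) 3 (Suc j))"
  proof (intro allI impI)
    fix j assume j: "j < 2*k"
    show "G (tnode 2 2 (2*k) 3 j) \<noteq> G (tnode 2 2 (2*k) 3 (Suc j))"
    proof (cases "Suc j = 2*k")
      case True
      then have "j = 2*k - 1" by simp
      then show ?thesis using True h G1[OF j] G2 by simp
    next
      case False
      then have "Suc j < 2*k" using j by simp
      then show ?thesis using h G1[OF j] G1[of "Suc j"] unfolding pchain_def by simp
    qed
  qed
qed

lemma dsum: "finite X \<Longrightarrow> finite Y \<Longrightarrow>
  (\<Sum>x\<in>X. \<Sum>y\<in>Y. (if P x \<and> R y then c else 0::nat)) = card {x\<in>X. P x} * card {y\<in>Y. R y} * c"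
proof -
  assume fX: "finite X" and fY: "finite Y"
  have "(\<Sum>x\<in>X. \<Sum>y\<in>Y. (if P x \<and> R y then c else 0::nat)) = (\<Sum>x\<in>X. (if P x then 1 else 0) * (card {y\<in>Y. R y} * c))"
  proof (rule sum.cong[OF refl])
    fix x
    have "(\<Sum>y\<in>Y. (if R y then 1 else 0::nat)) * c = card {y\<in>Y. R y} * c" using sum_ind[OF fY] by simp
    have "(\<Sum>y\<in>Y. (if R y then c else 0::nat)) = sum (\<lambda>_. c) {y\<in>Y. R y}"
      using sum.inter_filter[OF fY, of "\<lambda>_. c" R] by simp
    then show "(\<Sum>y\<in>Y. (if P x \<and> R y then c else 0::nat)) = (if P x then 1 else 0) * (card {y\<in>Y. R y} * c)"
      by (cases "P x") auto
  qed
  also have "\<dots> = card {x\<in>X. P x} * card {y\<in>Y. R y} * c"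
    using sum_ind[OF fX, of P] by (simp add: sum_distrib_right[symmetric])
  finally show ?thesis .
qed


lemma decomp:
  assumes k: "k \<ge> 1" and fin: "\<forall>w\<in>theta_verts 2 2 (2*k). finite (L w)"
  shows "num_list_col (theta_verts 2 2 (2*k)) (theta_edges 2 2 (2*k)) L =
    (\<Sum>\<alpha>\<in>L TU. \<Sum>\<beta>\<in>L TV. card (L (TI 1 1) - {\<alpha>, \<beta>}) * card (L (TI 2 1) - {\<alpha>, \<beta>}) * Qc L \<alpha> (2*k) \<beta>)"
proof -
  define E where "E = theta_edges 2 2 (2*k)"
  define P where "P = (\<lambda>f::tvert \<Rightarrow> nat. \<forall>(x,y)\<in>E. f x \<noteq> f y)"
  define R4 where "R4 = Wp (2*k)"
  define R3 where "R3 = insert (TI 2 1) R4"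
  define R2 where "R2 = insert (TI 1 1) R3"
  define R1 where "R1 = insert TV R2"
  have V: "theta_verts 2 2 (2*k) = insert TU R1" unfolding R1_def R2_def R3_def R4_def using verts_eq[OF k] .
  have finL: "\<forall>v\<in>insert TU R1. finite (L v)" using fin V by simp
  have fR4: "finite R4" unfolding R4_def by (rule Wp_fin)
  have nR4: "TI 2 1 \<notin> R4" "TI 1 1 \<notin> R4" "TV \<notin> R4" "TU \<notin> R4" unfolding R4_def Wp_def by auto
  have inner: "card {h \<in> PiE R4 L. P (h(TI 2 1 := y, TI 1 1 := x, TV := \<beta>, TU := \<alpha>))}
      = (if (\<alpha> \<noteq> x \<and> x \<noteq> \<beta>) \<and> (\<alpha> \<noteq> y \<and> y \<noteq> \<beta>) then Qc L \<alpha> (2*k) \<beta> else 0)" for x y \<alpha> \<beta>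
  proof -
    have "P (h(TI 2 1 := y, TI 1 1 := x, TV := \<beta>, TU := \<alpha>)) =
       ((\<alpha> \<noteq> x \<and> x \<noteq> \<beta>) \<and> (\<alpha> \<noteq> y \<and> y \<noteq> \<beta>) \<and> pchain \<alpha> (2*k) h \<and> pathf \<alpha> h (2*k - 1) \<noteq> \<beta>)" for h
    proof -
      let ?F = "h(TI 2 1 := y, TI 1 1 := x, TV := \<beta>, TU := \<alpha>)"
      have "(\<forall>j<2*k. ?F (tnode 2 2 (2*k) 3 j) \<noteq> ?F (tnode 2 2 (2*k) 3 (Suc j))) =
          (pchain \<alpha> (2*k) h \<and> pathf \<alpha> h (2*k - 1) \<noteq> \<beta>)"
        by (rule path_iff[OF k]) (use k in \<open>auto simp: tn3 pathf_def\<close>)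
      then show ?thesis unfolding P_def E_def proper_iff[OF k] by auto
    qed
    then have "{h \<in> PiE R4 L. P (h(TI 2 1 := y, TI 1 1 := x, TV := \<beta>, TU := \<alpha>))} =
       (if (\<alpha> \<noteq> x \<and> x \<noteq> \<beta>) \<and> (\<alpha> \<noteq> y \<and> y \<noteq> \<beta>) then
         {h \<in> PiE (Wp (2*k)) L. pchain \<alpha> (2*k) h \<and> pathf \<alpha> h (2*k - 1) \<noteq> \<beta>} else {})"
      unfolding R4_def by auto
    then show ?thesis unfolding Qc_def by simp
  qed
  have "num_list_col (theta_verts 2 2 (2*k)) E L = card {f \<in> PiE (insert TU R1) L. P f}"
    unfolding num_list_col_def V P_def ..
  also have "\<dots> = (\<Sum>\<alpha>\<in>L TU. card {g \<in> PiE R1 L. P (g(TU := \<alpha>))})"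
    by (rule peel) (use finL fR4 nR4 in \<open>auto simp: R1_def R2_def R3_def\<close>)
  also have "\<dots> = (\<Sum>\<alpha>\<in>L TU. \<Sum>\<beta>\<in>L TV. card {g \<in> PiE R2 L. P (g(TV := \<beta>, TU := \<alpha>))})"
    unfolding R1_def
    by (rule sum.cong[OF refl], rule peel) (use finL fR4 nR4 in \<open>auto simp: R1_def R2_def R3_def\<close>)
  also have "\<dots> = (\<Sum>\<alpha>\<in>L TU. \<Sum>\<beta>\<in>L TV. \<Sum>x\<in>L (TI 1 1). card {g \<in> PiE R3 L. P (g(TI 1 1 := x, TV := \<beta>, TU := \<alpha>))})"
    unfolding R2_def
    by (rule sum.cong[OF refl], rule sum.cong[OF refl], rule peel) (use finL fR4 nR4 in \<open>auto simp: R1_def R2_def R3_def\<close>)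
  also have "\<dots> = (\<Sum>\<alpha>\<in>L TU. \<Sum>\<beta>\<in>L TV. \<Sum>x\<in>L (TI 1 1). \<Sum>y\<in>L (TI 2 1). card {g \<in> PiE R4 L. P (g(TI 2 1 := y, TI 1 1 := x, TV := \<beta>, TU := \<alpha>))})"
    unfolding R3_def
    by (rule sum.cong[OF refl], rule sum.cong[OF refl], rule sum.cong[OF refl], rule peel) (use finL fR4 nR4 in \<open>auto simp: R1_def R2_def R3_def\<close>)
  also have "\<dots> = (\<Sum>\<alpha>\<in>L TU. \<Sum>\<beta>\<in>L TV. card (L (TI 1 1) - {\<alpha>, \<beta>}) * card (L (TI 2 1) - {\<alpha>, \<beta>}) * Qc L \<alpha> (2*k) \<beta>)"
  proof (rule sum.cong[OF refl], rule sum.cong[OF refl])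
    fix \<alpha> \<beta>
    have f1: "finite (L (TI 1 1))" "finite (L (TI 2 1))" using finL by (auto simp: R1_def R2_def R3_def)
    have s: "{x \<in> L (TI 1 1). \<alpha> \<noteq> x \<and> x \<noteq> \<beta>} = L (TI 1 1) - {\<alpha>, \<beta>}"
       "{x \<in> L (TI 2 1). \<alpha> \<noteq> x \<and> x \<noteq> \<beta>} = L (TI 2 1) - {\<alpha>, \<beta>}" by auto
    show "(\<Sum>x\<in>L (TI 1 1). \<Sum>y\<in>L (TI 2 1). card {g \<in> PiE R4 L. P (g(TI 2 1 := y, TI 1 1 := x, TV := \<beta>, TU := \<alpha>))})
       = card (L (TI 1 1) - {\<alpha>, \<beta>}) * card (L (TI 2 1) - {\<alpha>, \<beta>}) * Qc L \<alpha> (2*k) \<beta>"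
      unfolding inner dsum[OF f1] s ..
  qed
  finally show ?thesis unfolding E_def .
qed


lemma pa_ge5: "j \<ge> 4 \<Longrightarrow> pa j \<ge> 5"
proof (induction j rule: dec_induct)
  case base
  have o: "odd (3::nat)" "\<not> odd (2::nat)" "odd (1::nat)" "\<not> odd (0::nat)" by simp_all
  have "pa 1 = 0" "pa 2 = 1" using o by (simp_all add: numeral_eq_Suc)
  then have "pa 3 = 2" using o(2) by (simp add: numeral_eq_Suc)
  then have "pa 4 = 5" using o(1) by (simp add: numeral_eq_Suc)
  then show ?case by simp
next
  case (step n) then show ?case by simp
qed

lemma K3_count:
  assumes k: "k \<ge> 1"
  shows "num_col (theta_verts 2 2 (2*k)) (theta_edges 2 2 (2*k)) 3 = 18 * pa (2*k) + 12"
proof -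
  have "num_col (theta_verts 2 2 (2*k)) (theta_edges 2 2 (2*k)) 3 =
    (\<Sum>\<alpha>\<in>{1..3}. \<Sum>\<beta>\<in>{1..3}. card ({1..3} - {\<alpha>, \<beta>}) * card ({1..3::nat} - {\<alpha>, \<beta>}) * Qc (\<lambda>_. {1..3}) \<alpha> (2*k) \<beta>)"
    unfolding num_col_def by (rule decomp[OF k]) auto
  also have "\<dots> = (\<Sum>\<alpha>\<in>{1..3}. \<Sum>\<beta>\<in>{1..3}. card ({1..3} - {\<alpha>, \<beta>}) * card ({1..3::nat} - {\<alpha>, \<beta>}) * (pa (2*k) + (if \<beta> = \<alpha> then 1 else 0)))"
  proof (intro sum.cong refl)
    fix \<alpha> \<beta> :: nat assume "\<alpha> \<in> {1..3}" "\<beta> \<in> {1..3}"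
    then show "card ({1..3} - {\<alpha>, \<beta>}) * card ({1..3::nat} - {\<alpha>, \<beta>}) * Qc (\<lambda>_. {1..3}) \<alpha> (2*k) \<beta> =
      card ({1..3} - {\<alpha>, \<beta>}) * card ({1..3::nat} - {\<alpha>, \<beta>}) * (pa (2*k) + (if \<beta> = \<alpha> then 1 else 0))"
      using Qc_K3[of \<alpha> "2*k"] k by simp
  qed
  also have "\<dots> = 18 * pa (2*k) + 12"
  proof -
    have e: "{1..3::nat} = {1,2,3}" by auto
    show ?thesis unfolding e by (simp add: insert_Diff_if)
  qed
  finally show ?thesis .
qed

theorem lemma21:
  fixes k :: nat and L :: "tvert \<Rightarrow> nat set"
  assumes "k \<ge> 2"
    and "\<forall>w \<in> theta_verts 2 2 (2*k). card (L w) = 3"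
    and "L TU \<noteq> L TV"
  shows "num_list_col (theta_verts 2 2 (2*k)) (theta_edges 2 2 (2*k)) L
         \<ge> num_col (theta_verts 2 2 (2*k)) (theta_edges 2 2 (2*k)) 3"
proof -
  have k: "k \<ge> 1" using assms(1) by simp
  have fin: "\<forall>w\<in>theta_verts 2 2 (2*k). finite (L w)"
    using assms(2) by (metis card.infinite zero_neq_numeral)
  have V: "theta_verts 2 2 (2*k) = insert TU (insert TV (insert (TI 1 1) (insert (TI 2 1) (Wp (2*k)))))"
    using verts_eq[OF k] .
  have c: "card (L TU) = 3" "card (L TV) = 3" "card (L (TI 1 1)) = 3" "card (L (TI 2 1)) = 3"
    using assms(2) V by auto
  have c3: "\<forall>j. 0 < j \<and> j < 2*k \<longrightarrow> card (L (TI 3 j)) = 3"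
    using assms(2) V unfolding Wp_def by auto
  have Qge: "Qc L \<alpha> (2*k) \<beta> \<ge> pa (2*k)" for \<alpha> \<beta>
    using Qc_list[OF c3, of "2*k" \<alpha>] k by auto
  have p5: "pa (2*k) \<ge> 5" using pa_ge5 assms(1) by simp
  have "num_list_col (theta_verts 2 2 (2*k)) (theta_edges 2 2 (2*k)) L =
    (\<Sum>\<alpha>\<in>L TU. \<Sum>\<beta>\<in>L TV. card (L (TI 1 1) - {\<alpha>, \<beta>}) * card (L (TI 2 1) - {\<alpha>, \<beta>}) * Qc L \<alpha> (2*k) \<beta>)"
    by (rule decomp[OF k fin])
  also have "\<dots> \<ge> (\<Sum>\<alpha>\<in>L TU. \<Sum>\<beta>\<in>L TV. card (L (TI 1 1) - {\<alpha>, \<beta>}) * card (L (TI 2 1) - {\<alpha>, \<beta>}) * pa (2*k))"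
    by (intro sum_mono mult_left_mono Qge) simp
  finally have "num_list_col (theta_verts 2 2 (2*k)) (theta_edges 2 2 (2*k)) L \<ge>
      (\<Sum>\<alpha>\<in>L TU. \<Sum>\<beta>\<in>L TV. card (L (TI 1 1) - {\<alpha>, \<beta>}) * card (L (TI 2 1) - {\<alpha>, \<beta>})) * pa (2*k)"
    by (simp add: sum_distrib_right)
  moreover have "(\<Sum>\<alpha>\<in>L TU. \<Sum>\<beta>\<in>L TV. card (L (TI 1 1) - {\<alpha>, \<beta>}) * card (L (TI 2 1) - {\<alpha>, \<beta>})) \<ge> 21"
    by (rule sumA) (use c assms(3) in auto)
  ultimately have "num_list_col (theta_verts 2 2 (2*k)) (theta_edges 2 2 (2*k)) L \<ge> 21 * pa (2*k)"
    by (meson le_trans mult_le_mono1)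
  then show ?thesis unfolding K3_count[OF k] using p5 by linarith
qed

end
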